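(* There exists a function $\phi:\mathbb{R}\to\mathbb{R}$ generated by a $\sigma$-activated network with width $3$ and depth $2$ such that $\phi(x)=x^2$ for all $x\in[-1,1]$.
   Context: Let $\sigma_1:\mathbb{R}\to\mathbb{R}$ be the continuous triangular-wave function of period $2$: $\sigma_1(x)=|x|$ for $x\in[-1,1]$, $\sigma_1(x+2)=\sigma_1(x)$. The activation is $\sigma(x)=\sigma_1(x)$ for $x\ge0$ and $\sigma(x)=x/(|x|+1)$ for $x<0$, applied entrywise. A function generated by a $\sigma$-activated network with one input, width $N$ and depth $L$ is a function of the form $\mathcal{L}_{\ell}\circ\sigma\circ\mathcal{L}_{\ell-1}\circ\cdots\circ\sigma\circ\mathcal{L}_0$ with $\ell\le L$ hidden layers, affine maps $\mathcal{L}_i$, $\mathcal{L}_0$ with domain $\mathbb{R}$, $\mathcal{L}_\ell$ with codomain $\mathbb{R}$, and at most $N$ neurons in each hidden layer. *)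

theory Defs
  imports Complex_Main
begin

(* Triangular wave of period 2: |x| on [-1,1], extended 2-periodically.
   x - 2*floor((x+1)/2) is the representative of x in [-1,1). *)
definition sigma1 :: "real \<Rightarrow> real" where
  "sigma1 x = \<bar>x - 2 * of_int \<lfloor>(x + 1) / 2\<rfloor>\<bar>"

definition sigma :: "real \<Rightarrow> real" where
  "sigma x = (if x \<ge> 0 then sigma1 x else x / (\<bar>x\<bar> + 1))"

(* hidden N l n h : h x is the output (entries 0..n-1) of the l-th hidden layer
   of a sigma-activated network with one input and at most N neurons per
   hidden layer; the last hidden layer has exactly n neurons. *)
inductive hidden :: "nat \<Rightarrow> nat \<Rightarrow> nat \<Rightarrow> (real \<Rightarrow> nat \<Rightarrow> real) \<Rightarrow> bool"
  for N :: nat where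
  first: "\<lbrakk>1 \<le> n; n \<le> N\<rbrakk> \<Longrightarrow>
     hidden N 1 n (\<lambda>x i. sigma (w i * x + b i))"
| step: "\<lbrakk>hidden N l m h; 1 \<le> n; n \<le> N\<rbrakk> \<Longrightarrow>
     hidden N (Suc l) n (\<lambda>x i. sigma ((\<Sum>j<m. W i j * h x j) + b i))"

definition generated_by_net :: "nat \<Rightarrow> nat \<Rightarrow> (real \<Rightarrow> real) \<Rightarrow> bool" where
  "generated_by_net N L \<phi> \<longleftrightarrow>
     (\<exists>l m h c d. 1 \<le> l \<and> l \<le> L \<and> hidden N l m h \<and>
        \<phi> = (\<lambda>x. (\<Sum>j<m. c j * h x j) + d))"

end

theory Submission
  imports Defs
begin

lemma sigma_neg: "x < 0 \<Longrightarrow> sigma x = x / (1 - x)"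
  unfolding sigma_def by auto

theorem lemma17:
  shows "\<exists>\<phi>. generated_by_net 3 2 \<phi> \<and> (\<forall>x::real. -1 \<le> x \<and> x \<le> 1 \<longrightarrow> \<phi> x = x ^ 2)"
proof -
  define w :: "nat \<Rightarrow> real" where "w = (\<lambda>i. if i = 0 then 1 else -1)"
  define b :: "nat \<Rightarrow> real" where "b = (\<lambda>i. -2)"
  define W :: "nat \<Rightarrow> nat \<Rightarrow> real" where "W = (\<lambda>i j. -2)"
  define b2 :: "nat \<Rightarrow> real" where "b2 = (\<lambda>i. -3)"
  define h1 where "h1 = (\<lambda>x i. sigma (w i * x + b i))"
  define h2 where "h2 = (\<lambda>x i. sigma ((\<Sum>j<2. W i j * h1 x j) + b2 i))"
  define c :: "nat \<Rightarrow> real" where "c = (\<lambda>i. -12)"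
  have H1: "hidden 3 1 2 h1" unfolding h1_def by (rule hidden.first) auto
  have H2: "hidden 3 (Suc 1) 1 h2" unfolding h2_def by (rule hidden.step[OF H1]) auto
  have G: "generated_by_net 3 2 (\<lambda>x. (\<Sum>j<1. c j * h2 x j) + (-3))"
    unfolding generated_by_net_def using H2 by (intro exI[of _ 2] exI[of _ 1] exI[of _ h2] exI[of _ c] exI[of _ "-3"]) (auto simp: numeral_2_eq_2)
  show ?thesis
  proof (intro exI conjI allI impI, rule G)
    fix x :: real assume x: "-1 \<le> x \<and> x \<le> 1"
    have a: "h1 x 0 = (x - 2) / (3 - x)"
      unfolding h1_def w_def b_def using x by (subst sigma_neg) (auto simp: algebra_simps)
    have bb: "h1 x (Suc 0) = (-x - 2) / (3 + x)"
      unfolding h1_def w_def b_def using x by (subst sigma_neg) (auto simp: algebra_simps)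
    have s: "(\<Sum>j<2. W 0 j * h1 x j) + b2 0 = -3 - 2 * ((x - 2) / (3 - x)) - 2 * ((-x - 2) / (3 + x))"
      by (simp add: W_def b2_def a bb numeral_2_eq_2 lessThan_Suc)
    define z where "z = -3 - 2 * ((x - 2) / (3 - x)) - 2 * ((-x - 2) / (3 + x))"
    have ax: "\<bar>x\<bar> \<le> 1" using x by auto
    have "\<bar>x\<bar> * \<bar>x\<bar> \<le> 1" using mult_le_one[OF ax abs_ge_zero ax] .
    then have xx: "x * x \<le> 1" by (metis abs_mult_self_eq)
    define q where "q = 9 - x^2"
    have q: "q \<ge> 8" unfolding q_def power2_eq_square using xx by simp
    have q9: "q \<le> 9" unfolding q_def by simp
    have p1: "3 - x > 0" "3 + x > 0" using x by auto
    have e1: "(x - 2) / (3 - x) = -1 + 1 / (3 - x)" using p1 by (simp add: field_simps)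
    have e2: "(-x - 2) / (3 + x) = -1 + 1 / (3 + x)" using p1 by (simp add: field_simps)
    have e3: "1 / (3 - x) + 1 / (3 + x) = 6 / q" unfolding q_def using p1
      by (simp add: field_simps power2_eq_square)
    have z: "z = 1 - 12 / q" unfolding z_def e1 e2 using e3 by simp
    have zn: "z < 0" unfolding z using q q9 by simp
    have "h2 x 0 = z / (1 - z)" unfolding h2_def s z_def[symmetric] using zn by (simp add: sigma_neg)
    also have "\<dots> = -1 + q / 12" unfolding z using q
      by (simp add: field_simps)
    also have "\<dots> = -1 + (9 - x^2) / 12" unfolding q_def ..
    finally show "(\<Sum>j<1. c j * h2 x j) + (-3) = x^2" by (simp add: c_def field_simps)
  qed
qed

end
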